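(* Let $k\geq 1$ and $p$ a propositional variable. Then $\mathbf{GLP}\vdash[1]Q^k(p)$, and $Q^k(p)$ is a conjunction of $k$ instances of reflection $[0]\chi\to\chi$. Moreover, if $\sigma$ is a substitution such that $\mathbf{GLP}\vdash\bigwedge_{i=1}^j([0]\psi_i\to\psi_i)\to\sigma(p)$ for some $j\leq k$ and some formulas $\psi_1,\dots,\psi_j$, then $\sigma$ is a unifier of $[1]p$ and $\sigma\leq Q^k$. That is, $Q^k$ is the most general unifier of $[1]p$ among those following from at most $k$ instances of reflection.
   Context: $\mathbf{GLP}$ is the propositional polymodal logic with modalities $[0],[1],\dots$ ($\langle k\rangle:=\neg[k]\neg$) axiomatized by classical tautologies; $[k](\phi\to\psi)\to([k]\phi\to[k]\psi)$; $[k]([k]\phi\to\phi)\to[k]\phi$; $\langle j\rangle\phi\to[k]\langle j\rangle\phi$ for $j<k$; $[j]\phi\to[k]\phi$ for $j\leq k$; rules modus ponens and necessitation. A substitution commutes with all connectives and modalities; a unifier of $[1]p$ is a substitution $\sigma$ with $\mathbf{GLP}\vdash[1]\sigma(p)$. $\tau\leq\sigma$ means there is a substitution $\theta$ with $\mathbf{GLP}\vdash\tau(q)\leftrightarrow\theta(\sigma(q))$ for every variable $q$; $Q^k$ also denotes the substitution $p\mapsto Q^k(p)$. Define $Q_1(p):=p$, $Q_{i+1}(p):=p\lor[0]Q_i(p)$, $Q^k(p):=\bigwedge_{i=1}^k([0]Q_i(p)\to Q_i(p))$. *)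

theory Defs
  imports Main
begin

datatype fm = Var nat | Bot | Imp fm fm | Box nat fm

definition Neg :: "fm \<Rightarrow> fm" where "Neg a = Imp a Bot"
definition Top :: fm where "Top = Imp Bot Bot"
definition And :: "fm \<Rightarrow> fm \<Rightarrow> fm" where "And a b = Neg (Imp a (Neg b))"
definition Or :: "fm \<Rightarrow> fm \<Rightarrow> fm" where "Or a b = Imp (Neg a) b"
definition Iff :: "fm \<Rightarrow> fm \<Rightarrow> fm" where "Iff a b = And (Imp a b) (Imp b a)"
definition Dia :: "nat \<Rightarrow> fm \<Rightarrow> fm" where "Dia k a = Neg (Box k (Neg a))"

fun tval :: "(fm \<Rightarrow> bool) \<Rightarrow> fm \<Rightarrow> bool" where
  "tval v (Var q) = v (Var q)"
| "tval v Bot = False"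
| "tval v (Imp a b) = (tval v a \<longrightarrow> tval v b)"
| "tval v (Box k a) = v (Box k a)"

definition tautology :: "fm \<Rightarrow> bool" where
  "tautology a \<longleftrightarrow> (\<forall>v. tval v a)"

inductive GLP :: "fm \<Rightarrow> bool" where
  taut: "tautology a \<Longrightarrow> GLP a"
| K: "GLP (Imp (Box k (Imp a b)) (Imp (Box k a) (Box k b)))"
| Loeb: "GLP (Imp (Box k (Imp (Box k a) a)) (Box k a))"
| neg_intro: "j < k \<Longrightarrow> GLP (Imp (Dia j a) (Box k (Dia j a)))"
| mono: "j \<le> k \<Longrightarrow> GLP (Imp (Box j a) (Box k a))"
| mp: "GLP (Imp a b) \<Longrightarrow> GLP a \<Longrightarrow> GLP b"
| nec: "GLP a \<Longrightarrow> GLP (Box k a)"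

fun subst :: "(nat \<Rightarrow> fm) \<Rightarrow> fm \<Rightarrow> fm" where
  "subst s (Var q) = s q"
| "subst s Bot = Bot"
| "subst s (Imp a b) = Imp (subst s a) (subst s b)"
| "subst s (Box k a) = Box k (subst s a)"

fun conj :: "fm list \<Rightarrow> fm" where
  "conj [] = Top"
| "conj [a] = a"
| "conj (a # as) = And a (conj as)"

definition refl0 :: "fm \<Rightarrow> fm" where "refl0 a = Imp (Box 0 a) a"

text \<open>Q_1(p) = p, Q_{i+1}(p) = p \<or> [0] Q_i(p)  (index 0 is junk, set equal to p).\<close>
fun Qf :: "nat \<Rightarrow> nat \<Rightarrow> fm" where
  "Qf p 0 = Var p"
| "Qf p (Suc 0) = Var p"
| "Qf p (Suc (Suc i)) = Or (Var p) (Box 0 (Qf p (Suc i)))"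

definition Qk :: "nat \<Rightarrow> nat \<Rightarrow> fm" where
  "Qk k p = conj (map (\<lambda>i. refl0 (Qf p i)) [1..<k+1])"

definition Qk_subst :: "nat \<Rightarrow> nat \<Rightarrow> nat \<Rightarrow> fm" where
  "Qk_subst k p = (\<lambda>q. if q = p then Qk k p else Var q)"

definition unifier_box1 :: "(nat \<Rightarrow> fm) \<Rightarrow> nat \<Rightarrow> bool" where
  "unifier_box1 s p \<longleftrightarrow> GLP (Box 1 (s p))"

definition more_general :: "(nat \<Rightarrow> fm) \<Rightarrow> (nat \<Rightarrow> fm) \<Rightarrow> bool" (infix "\<preceq>" 50) where
  "tau \<preceq> sigma \<longleftrightarrow> (\<exists>theta. \<forall>q. GLP (Iff (tau q) (subst theta (sigma q))))"

end

theory Submission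
  imports Defs
begin

lemma tv_Neg[simp]: "tval v (Neg a) = (\<not> tval v a)" by (simp add: Neg_def)
lemma tv_Top[simp]: "tval v Top" by (simp add: Top_def)
lemma tv_And[simp]: "tval v (And a b) = (tval v a \<and> tval v b)" by (simp add: And_def)
lemma tv_Or[simp]: "tval v (Or a b) = (tval v a \<or> tval v b)" by (auto simp add: Or_def)
lemma tv_Iff[simp]: "tval v (Iff a b) = (tval v a = tval v b)" by (auto simp add: Iff_def)
lemma tv_refl0[simp]: "tval v (refl0 a) = (tval v (Box 0 a) \<longrightarrow> tval v a)" by (simp add: refl0_def)
lemma tv_conj[simp]: "tval v (conj l) = (\<forall>a\<in>set l. tval v a)"
  by (induct l rule: conj.induct) auto

fun imps :: "fm list \<Rightarrow> fm \<Rightarrow> fm" where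
  "imps [] c = c" | "imps (h#hs) c = Imp h (imps hs c)"

lemma tval_imps: "tval v (imps hs c) = ((\<forall>h\<in>set hs. tval v h) \<longrightarrow> tval v c)"
  by (induct hs) auto

lemma GLP_imps: "GLP (imps hs c) \<Longrightarrow> \<forall>h\<in>set hs. GLP h \<Longrightarrow> GLP c"
  by (induct hs) (auto intro: GLP.mp)

lemma ptaut: "(\<And>v. \<forall>h\<in>set hs. tval v h \<Longrightarrow> tval v c) \<Longrightarrow> \<forall>h\<in>set hs. GLP h \<Longrightarrow> GLP c"
proof -
  assume a: "\<And>v. \<forall>h\<in>set hs. tval v h \<Longrightarrow> tval v c" and b: "\<forall>h\<in>set hs. GLP h"
  have "GLP (imps hs c)" by (rule GLP.taut) (auto simp: tautology_def tval_imps a)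
  then show ?thesis using GLP_imps b by blast
qed

lemma bimps: "GLP (Imp d (Box k (imps hs c))) \<Longrightarrow> \<forall>h\<in>set hs. GLP (Imp d (Box k h)) \<Longrightarrow> GLP (Imp d (Box k c))"
proof (induct hs)
  case Nil then show ?case by simp
next
  case (Cons h hs)
  have K: "GLP (Imp (Box k (Imp h (imps hs c))) (Imp (Box k h) (Box k (imps hs c))))" by (rule GLP.K)
  have "GLP (Imp d (Box k (imps hs c)))"
    by (rule ptaut[of "[Imp (Box k (Imp h (imps hs c))) (Imp (Box k h) (Box k (imps hs c))), Imp d (Box k (Imp h (imps hs c))), Imp d (Box k h)]"])
       (use K Cons.prems in auto)
  then show ?case using Cons by auto
qed

lemma bptaut: "(\<And>v. \<forall>h\<in>set hs. tval v h \<Longrightarrow> tval v c) \<Longrightarrow> \<forall>h\<in>set hs. GLP (Imp d (Box k h)) \<Longrightarrow> GLP (Imp d (Box k c))"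
proof -
  assume a: "\<And>v. \<forall>h\<in>set hs. tval v h \<Longrightarrow> tval v c" and b: "\<forall>h\<in>set hs. GLP (Imp d (Box k h))"
  have "GLP (imps hs c)" by (rule GLP.taut) (auto simp: tautology_def tval_imps a)
  then have "GLP (Box k (imps hs c))" by (rule GLP.nec)
  then have "GLP (Imp d (Box k (imps hs c)))" by (intro ptaut[of "[Box k (imps hs c)]"]) auto
  then show ?thesis using bimps b by blast
qed

lemma nec_imp: "GLP c \<Longrightarrow> GLP (Imp d (Box k c))"
  using GLP.nec[of c k] by (intro ptaut[of "[Box k c]"]) auto

lemma imp_intro: "GLP c \<Longrightarrow> GLP (Imp d c)"
  by (intro ptaut[of "[c]"]) auto

lemma four: "GLP (Imp (Box 0 a) (Box 0 (Box 0 a)))"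
proof -
  define B where "B = And (Box 0 a) a"
  have 1: "GLP (Imp (Box 0 B) (Box 0 a))"
    by (rule bptaut[of "[B]"]) (auto simp: B_def intro: GLP.taut simp: tautology_def)
  have 2: "GLP (Imp a (Imp (Box 0 B) B))"
    by (rule ptaut[of "[Imp (Box 0 B) (Box 0 a)]"]) (use 1 in \<open>auto simp: B_def\<close>)
  have 3: "GLP (Imp (Box 0 a) (Box 0 (Imp (Box 0 B) B)))"
    by (rule bptaut[of "[a, Imp a (Imp (Box 0 B) B)]"]) (auto intro: nec_imp 2 GLP.taut simp: tautology_def)
  have L: "GLP (Imp (Box 0 (Imp (Box 0 B) B)) (Box 0 B))" by (rule GLP.Loeb)
  have 4: "GLP (Imp (Box 0 B) (Box 0 (Box 0 a)))"
    by (rule bptaut[of "[B]"]) (auto simp: B_def intro: GLP.taut simp: tautology_def)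
  show ?thesis
    by (rule ptaut[of "[Imp (Box 0 a) (Box 0 (Imp (Box 0 B) B)), Imp (Box 0 (Imp (Box 0 B) B)) (Box 0 B), Imp (Box 0 B) (Box 0 (Box 0 a))]"])
       (use 3 L 4 in auto)
qed

lemma R1: "GLP (Box 1 (refl0 a))"
proof -
  have m: "GLP (Imp (Box 0 a) (Box 1 a))" by (rule GLP.mono) simp
  have n: "GLP (Imp (Dia 0 (Neg a)) (Box 1 (Dia 0 (Neg a))))" by (rule GLP.neg_intro) simp
  have e1: "GLP (Imp (Box 0 (Neg (Neg a))) (Box 0 a))"
    by (rule bptaut[of "[Neg (Neg a)]"]) (auto intro: GLP.taut simp: tautology_def)
  have e2: "GLP (Imp (Box 0 a) (Box 0 (Neg (Neg a))))"
    by (rule bptaut[of "[a]"]) (auto intro: GLP.taut simp: tautology_def)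
  have c1: "GLP (Imp (Box 0 a) (Box 1 (refl0 a)))"
    by (rule bptaut[of "[a]"]) (use m in auto)
  have c2: "GLP (Imp (Neg (Box 0 a)) (Box 1 (refl0 a)))"
    apply (rule bptaut[of "[Dia 0 (Neg a), Imp (Box 0 a) (Box 0 (Neg (Neg a)))]"])
     apply (auto simp: Dia_def)
    subgoal by (rule ptaut[of "[Imp (Dia 0 (Neg a)) (Box 1 (Dia 0 (Neg a))), Imp (Box 0 (Neg (Neg a))) (Box 0 a)]"]) (use n e1 in \<open>auto simp: Dia_def\<close>)
    subgoal by (rule nec_imp[OF e2])
    done
  show ?thesis
    by (rule ptaut[of "[Imp (Box 0 a) (Box 1 (refl0 a)), Imp (Neg (Box 0 a)) (Box 1 (refl0 a))]"]) (use c1 c2 in auto)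
qed


lemma R1': "GLP (Box (Suc 0) (refl0 a))" using R1 by simp

fun Qg :: "fm \<Rightarrow> nat \<Rightarrow> fm" where
  "Qg x 0 = x"
| "Qg x (Suc 0) = x"
| "Qg x (Suc (Suc i)) = Or x (Box 0 (Qg x (Suc i)))"

lemma Qg_Suc: "n \<ge> 1 \<Longrightarrow> Qg x (Suc n) = Or x (Box 0 (Qg x n))"
  by (cases n) auto

lemma tv_Qg: "tval v x \<Longrightarrow> tval v (Qg x i)"
  by (induct x i rule: Qg.induct) auto

definition bd :: "fm \<Rightarrow> fm" where "bd a = And a (Box 0 a)"
definition G :: "fm list \<Rightarrow> fm" where "G ts = conj (map bd ts)"

lemma tv_G[simp]: "tval v (G ts) = (\<forall>a\<in>set ts. tval v a \<and> tval v (Box 0 a))"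
  by (auto simp: G_def bd_def)

lemma claim:
  assumes H: "GLP (Imp (conj (map refl0 psis)) x)"
  shows "card (set psis - set ts) \<le> m \<Longrightarrow> GLP (Imp (G ts) (Qg x (Suc m)))"
proof (induct m arbitrary: ts)
  case 0
  then have sub: "set psis \<subseteq> set ts" by auto
  show ?case
    by (rule ptaut[of "[Imp (conj (map refl0 psis)) x]"]) (use H sub in auto)
next
  case (Suc m)
  let ?Q = "Qg x (Suc m)"
  have E: "GLP (Imp (And (G ts) (Box 0 \<psi>)) (Box 0 ?Q))" if ps: "\<psi> \<in> set psis - set ts" for \<psi>
  proof -
    have "set psis - set (\<psi>#ts) = (set psis - set ts) - {\<psi>}" by auto
    then have "card (set psis - set (\<psi>#ts)) = card (set psis - set ts) - 1"
      using ps by (simp add: card_Diff_singleton)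
    then have "card (set psis - set (\<psi>#ts)) \<le> m" using Suc.prems by simp
    then have IH: "GLP (Imp (G (\<psi>#ts)) ?Q)" using Suc.hyps by blast
    let ?d = "And (G ts) (Box 0 \<psi>)"
    have B: "GLP (Imp ?d (Box 0 (G (\<psi>#ts))))"
    proof (rule bptaut[of "\<psi> # Box 0 \<psi> # ts @ map (Box 0) ts"])
      fix v assume "\<forall>h\<in>set (\<psi> # Box 0 \<psi> # ts @ map (Box 0) ts). tval v h"
      then show "tval v (G (\<psi>#ts))" by (auto simp del: tval.simps)
    next
      show "\<forall>h\<in>set (\<psi> # Box 0 \<psi> # ts @ map (Box 0) ts). GLP (Imp ?d (Box 0 h))"
      proof
        fix h assume "h \<in> set (\<psi> # Box 0 \<psi> # ts @ map (Box 0) ts)"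
        then consider "h = \<psi>" | "h = Box 0 \<psi>" | "h \<in> set ts" | t where "t \<in> set ts" "h = Box 0 t"
          by auto
        then show "GLP (Imp ?d (Box 0 h))"
        proof cases
          case 1 then show ?thesis by (intro GLP.taut) (auto simp: tautology_def)
        next
          case 2 then show ?thesis
            by (intro ptaut[of "[Imp (Box 0 \<psi>) (Box 0 (Box 0 \<psi>))]"]) (auto intro: four)
        next
          case 3 then show ?thesis by (intro GLP.taut) (auto simp: tautology_def)
        next
          case 4 then show ?thesis
            by (intro ptaut[of "[Imp (Box 0 t) (Box 0 (Box 0 t))]"]) (auto intro: four)
        qed
      qed
    qed
    show ?thesis
      by (rule bptaut[of "[G (\<psi>#ts), Imp (G (\<psi>#ts)) ?Q]"]) (use B IH nec_imp in auto)
  qed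
  let ?E = "\<lambda>\<psi>. Imp (And (G ts) (Box 0 \<psi>)) (Box 0 ?Q)"
  show ?case
  proof (rule ptaut[of "Imp (conj (map refl0 psis)) x # map ?E (filter (\<lambda>\<psi>. \<psi> \<notin> set ts) psis)"])
    fix v assume A: "\<forall>h\<in>set (Imp (conj (map refl0 psis)) x # map ?E (filter (\<lambda>\<psi>. \<psi> \<notin> set ts) psis)). tval v h"
    show "tval v (Imp (G ts) (Qg x (Suc (Suc m))))"
    proof (cases "tval v x")
      case True then show ?thesis by simp
    next
      case False
      show ?thesis
        unfolding tval.simps(3)
      proof
        assume g: "tval v (G ts)"
        from A False obtain \<psi> where p: "\<psi> \<in> set psis" "tval v (Box 0 \<psi>)" "\<not> tval v \<psi>" by auto
        with g have "\<psi> \<notin> set ts" by auto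
        with A p g have "tval v (Box 0 ?Q)" by auto
        then show "tval v (Qg x (Suc (Suc m)))" by simp
      qed
    qed
  next
    show "\<forall>h\<in>set (Imp (conj (map refl0 psis)) x # map ?E (filter (\<lambda>\<psi>. \<psi> \<notin> set ts) psis)). GLP h"
      using H E by auto
  qed
qed

lemma down:
  "1 \<le> n \<Longrightarrow> n \<le> k+1 \<Longrightarrow> GLP (Imp (conj (map (\<lambda>i. refl0 (Qg x i)) [1..<k+1])) (Imp (Qg x n) x))"
proof (induct n)
  case 0 then show ?case by simp
next
  case (Suc n)
  let ?R = "conj (map (\<lambda>i. refl0 (Qg x i)) [1..<k+1])"
  show ?case
  proof (cases "n = 0")
    case True then show ?thesis by (intro GLP.taut) (auto simp: tautology_def)
  next
    case False
    then have IH: "GLP (Imp ?R (Imp (Qg x n) x))" using Suc by simp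
    have mem: "n \<in> set [1..<k+1]" using False Suc.prems by auto
    show ?thesis
    proof (rule ptaut[of "[Imp ?R (Imp (Qg x n) x)]"])
      fix v assume A: "\<forall>h\<in>set [Imp ?R (Imp (Qg x n) x)]. tval v h"
      show "tval v (Imp ?R (Imp (Qg x (Suc n)) x))"
      proof (clarsimp simp only: tval.simps)
        assume r: "tval v ?R" and q: "tval v (Qg x (Suc n))"
        have m2: "refl0 (Qg x n) \<in> set (map (\<lambda>i. refl0 (Qg x i)) [1..<k+1])" using mem by (simp only: set_map) (rule imageI)
        from r have "\<forall>a\<in>set (map (\<lambda>i. refl0 (Qg x i)) [1..<k+1]). tval v a" by (simp only: tv_conj)
        then have "tval v (refl0 (Qg x n))" using m2 by blast
        then show "tval v x" using A r q False by (auto simp: Qg_Suc)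
      qed
    qed (use IH in auto)
  qed
qed

lemma subst_conj: "subst s (conj l) = conj (map (subst s) l)"
  by (induct l rule: conj.induct) (auto simp: And_def Neg_def Top_def)

lemma subst_Qf: "subst s (Qf p i) = Qg (s p) i"
  by (induct p i rule: Qf.induct) (auto simp: Or_def Neg_def)

lemma subst_Qk: "subst s (Qk k p) = conj (map (\<lambda>i. refl0 (Qg (s p) i)) [1..<k+1])"
  unfolding Qk_def subst_conj map_map comp_def by (simp add: refl0_def subst_Qf)

theorem mainTheorem12:
  fixes k p :: nat
  assumes "k \<ge> 1"
  shows "GLP (Box 1 (Qk k p))
    \<and> (\<exists>chis. length chis = k \<and> Qk k p = conj (map refl0 chis))
    \<and> (\<forall>s j psis. j \<le> k \<and> length psis = j
          \<and> GLP (Imp (conj (map refl0 psis)) (s p))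
          \<longrightarrow> unifier_box1 s p \<and> s \<preceq> Qk_subst k p)"
proof (intro conjI allI impI)
  have "GLP (Imp Top (Box 1 (Qk k p)))"
    by (rule bptaut[of "map (\<lambda>i. refl0 (Qf p i)) [1..<k+1]"]) (auto simp: Qk_def intro: imp_intro R1')
  then show "GLP (Box 1 (Qk k p))"
    by (intro ptaut[of "[Imp Top (Box 1 (Qk k p))]"]) auto
  show "\<exists>chis. length chis = k \<and> Qk k p = conj (map refl0 chis)"
    by (rule exI[of _ "map (Qf p) [1..<k+1]"]) (simp add: Qk_def comp_def)
next
  fix s j psis
  assume a: "j \<le> k \<and> length psis = j \<and> GLP (Imp (conj (map refl0 psis)) (s p))"
  then have H: "GLP (Imp (conj (map refl0 psis)) (s p))" by simp
  have "GLP (Imp Top (Box 1 (conj (map refl0 psis))))"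
    by (rule bptaut[of "map refl0 psis"]) (auto intro: imp_intro R1')
  moreover have "GLP (Imp Top (Box 1 (Imp (conj (map refl0 psis)) (s p))))"
    using H by (rule nec_imp)
  ultimately have "GLP (Imp Top (Box 1 (s p)))"
    by (intro bptaut[of "[conj (map refl0 psis), Imp (conj (map refl0 psis)) (s p)]"]) auto
  then show "unifier_box1 s p" unfolding unifier_box1_def
    by (intro ptaut[of "[Imp Top (Box 1 (s p))]"]) auto
  let ?x = "s p"
  let ?R = "conj (map (\<lambda>i. refl0 (Qg ?x i)) [1..<k+1])"
  have "card (set psis - set []) \<le> j" using a card_length[of psis] by simp
  then have c: "GLP (Imp (G []) (Qg ?x (Suc j)))" using claim[OF H] by blast
  have d: "GLP (Imp ?R (Imp (Qg ?x (Suc j)) ?x))" using down[of "Suc j" k ?x] a by simp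
  have e: "GLP (Iff ?x ?R)"
  proof (rule ptaut[of "[Imp (G []) (Qg ?x (Suc j)), Imp ?R (Imp (Qg ?x (Suc j)) ?x)]"])
    fix v assume A: "\<forall>h\<in>set [Imp (G []) (Qg ?x (Suc j)), Imp ?R (Imp (Qg ?x (Suc j)) ?x)]. tval v h"
    have "tval v ?x \<Longrightarrow> tval v ?R" using tv_Qg[of v ?x] by simp
    moreover have "tval v ?R \<Longrightarrow> tval v ?x" using A by simp
    ultimately show "tval v (Iff ?x ?R)" by (simp only: tv_Iff) blast
  qed (use c d in simp)
  show "s \<preceq> Qk_subst k p"
    unfolding more_general_def
  proof (intro exI allI)
    fix q
    show "GLP (Iff (s q) (subst s (Qk_subst k p q)))"
    proof (cases "q = p")
      case True then show ?thesis using e by (simp add: Qk_subst_def subst_Qk)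
    next
      case False then show ?thesis by (auto simp: Qk_subst_def intro!: GLP.taut simp: tautology_def)
    qed
  qed
qed

end
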